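(* Let $H_m,H_{el}$ be finite groups with an action $(h,g)\mapsto h\cdot g$ of $H_{el}$ on $H_m$ satisfying $h\cdot(gg')=(h\cdot g)(h\cdot g')$, and let $\mathcal{A}=F(H_m)\times\mathbb{C}H_{el}$ be the modified quantum double, with elements written as functions in $F(H_m\times H_{el})$. Let $A\subset H_m$ be an $H_{el}$-orbit with preferred element $g_A$, $N_A=\{h\in H_{el}:h\cdot g_A=g_A\}$, and $\Pi^A_1$ the magnetic irreducible representation (trivial representation of $N_A$). Let $E\subseteq A$ and consider the condensate $|\phi_r\rangle=\sum_{g_i\in E}|g_i\rangle$, which as a function on $H_{el}$ is $|\phi_r(x)\rangle=1_{V_E}(x)$ with $V_E=\{x\in H_{el}:x\cdot g_A\in E\}$. Let $M_E=\{m\in H_{el}: mV_E=V_E\}=\{m\in H_{el}:\{m\cdot g_i\}_{g_i\in E}=E\}$ and let $K$ be the smallest subgroup of $H_m$ containing $E$. Then $\mathcal{T}_r:=\{a\in\mathcal{A}:(\mathrm{id}\otimes\Pi^A_1)\Delta(a)(1\otimes|\phi_r\rangle)=a\otimes|\phi_r\rangle\}$ equals $F(H_m/K)\otimes\mathbb{C}M_E$; that is, $f\in\mathcal{T}_r$ if and only if $f(x_1,y_1)=0$ whenever $y_1\notin M_E$, and $f(x_1k,y_1)=f(x_1,y_1)$ for all $x_1\in H_m$, $y_1\in H_{el}$, $k\in K$.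
   Context: Modified quantum double: vector space $F(H_m)\otimes\mathbb{C}H_{el}$ with basis $P_gh$, identified with $F(H_m\times H_{el})$ via $P_gh\leftrightarrow\delta_g\otimes\delta_h$; $P_ghP_{g'}h'=\delta_{g,h\cdot g'}P_ghh'$, $\Delta(P_gh)=\sum_{g'\in H_m}P_{g'}h\otimes P_{g'^{-1}g}h$ (in function notation $\Delta(f)(x_1,y_1;x_2,y_2)=f(x_1x_2,y_1)\delta_{y_1}(y_2)$), $\varepsilon(P_gh)=\delta_{g,e}$, $S(P_gh)=P_{h^{-1}\cdot g^{-1}}h^{-1}$. The carrier space of $\Pi^A_1$ is $\{\phi:H_{el}\to\mathbb{C}\mid \phi(xn)=\phi(x)\ \forall n\in N_A\}$, with action $(\Pi^A_1(f)\phi)(x)=\sum_{z\in H_{el}}f(x\cdot g_A,z)\phi(z^{-1}x)$; the basis vector $|g\rangle$ ($g\in A$) is the indicator function of $\{x\in H_{el}:x\cdot g_A=g\}$. $F(H_m/K)$ denotes functions on $H_m$ constant on left cosets $gK$. *)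

theory Defs
  imports Complex_Main "HOL-Algebra.Generated_Groups"
begin

text \<open>Modified quantum double F(H_m) x CH_el, elements written as functions
  f :: H_m x H_el => complex (only values on the carriers matter).
  G plays the role of H_m, H the role of H_el, act h g = h . g.\<close>

definition qd_Delta :: "('g, 'a) monoid_scheme \<Rightarrow> ('g \<times> 'h \<Rightarrow> complex)
    \<Rightarrow> ('g \<times> 'h) \<Rightarrow> ('g \<times> 'h) \<Rightarrow> complex" where
  "qd_Delta G f = (\<lambda>(x1, y1) (x2, y2). f (x1 \<otimes>\<^bsub>G\<^esub> x2, y1) * (if y1 = y2 then 1 else 0))"

definition Pi1 :: "('h, 'b) monoid_scheme \<Rightarrow> ('h \<Rightarrow> 'g \<Rightarrow> 'g) \<Rightarrow> 'g
    \<Rightarrow> ('g \<times> 'h \<Rightarrow> complex) \<Rightarrow> ('h \<Rightarrow> complex) \<Rightarrow> ('h \<Rightarrow> complex)" where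
  "Pi1 H act gA f \<phi> = (\<lambda>x. \<Sum>z\<in>carrier H. f (act x gA, z) * \<phi> (inv\<^bsub>H\<^esub> z \<otimes>\<^bsub>H\<^esub> x))"

text \<open>(id (x) Pi)Delta(a)(1 (x) phi), an element of A (x) V, written as a function
  (x1,y1) |-> vector in V.\<close>
definition id_Pi_Delta_apply :: "('g, 'a) monoid_scheme \<Rightarrow> ('h, 'b) monoid_scheme
    \<Rightarrow> ('h \<Rightarrow> 'g \<Rightarrow> 'g) \<Rightarrow> 'g \<Rightarrow> ('g \<times> 'h \<Rightarrow> complex) \<Rightarrow> ('h \<Rightarrow> complex)
    \<Rightarrow> ('g \<times> 'h) \<Rightarrow> ('h \<Rightarrow> complex)" where
  "id_Pi_Delta_apply G H act gA a \<phi> = (\<lambda>p. Pi1 H act gA (qd_Delta G a p) \<phi>)"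

definition tensor_vec :: "('g \<times> 'h \<Rightarrow> complex) \<Rightarrow> ('h \<Rightarrow> complex) \<Rightarrow> ('g \<times> 'h) \<Rightarrow> ('h \<Rightarrow> complex)" where
  "tensor_vec a \<phi> = (\<lambda>p x. a p * \<phi> x)"

definition V_E :: "('h, 'b) monoid_scheme \<Rightarrow> ('h \<Rightarrow> 'g \<Rightarrow> 'g) \<Rightarrow> 'g \<Rightarrow> 'g set \<Rightarrow> 'h set" where
  "V_E H act gA E = {x \<in> carrier H. act x gA \<in> E}"

definition phi_r :: "('h, 'b) monoid_scheme \<Rightarrow> ('h \<Rightarrow> 'g \<Rightarrow> 'g) \<Rightarrow> 'g \<Rightarrow> 'g set \<Rightarrow> 'h \<Rightarrow> complex" where
  "phi_r H act gA E = (\<lambda>x. if x \<in> V_E H act gA E then 1 else 0)"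

definition M_E :: "('h, 'b) monoid_scheme \<Rightarrow> ('h \<Rightarrow> 'g \<Rightarrow> 'g) \<Rightarrow> 'g \<Rightarrow> 'g set \<Rightarrow> 'h set" where
  "M_E H act gA E = {m \<in> carrier H. (\<lambda>x. m \<otimes>\<^bsub>H\<^esub> x) ` V_E H act gA E = V_E H act gA E}"

definition T_r :: "('g, 'a) monoid_scheme \<Rightarrow> ('h, 'b) monoid_scheme
    \<Rightarrow> ('h \<Rightarrow> 'g \<Rightarrow> 'g) \<Rightarrow> 'g \<Rightarrow> 'g set \<Rightarrow> ('g \<times> 'h \<Rightarrow> complex) set" where
  "T_r G H act gA E = {a. \<forall>x1\<in>carrier G. \<forall>y1\<in>carrier H. \<forall>x\<in>carrier H.
      id_Pi_Delta_apply G H act gA a (phi_r H act gA E) (x1, y1) x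
        = tensor_vec a (phi_r H act gA E) (x1, y1) x}"

end

theory Submission
  imports Defs
begin


lemma lhs_simp:
  assumes "finite (carrier H)" "y1 \<in> carrier H"
  shows "id_Pi_Delta_apply G H act gA f \<phi> (x1, y1) x
       = f (x1 \<otimes>\<^bsub>G\<^esub> act x gA, y1) * \<phi> (inv\<^bsub>H\<^esub> y1 \<otimes>\<^bsub>H\<^esub> x)"
proof -
  have "id_Pi_Delta_apply G H act gA f \<phi> (x1, y1) x
     = (\<Sum>z\<in>carrier H. if z = y1 then f (x1 \<otimes>\<^bsub>G\<^esub> act x gA, y1) * \<phi> (inv\<^bsub>H\<^esub> z \<otimes>\<^bsub>H\<^esub> x) else 0)"
    unfolding id_Pi_Delta_apply_def Pi1_def qd_Delta_def
    by (rule sum.cong) auto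
  also have "\<dots> = f (x1 \<otimes>\<^bsub>G\<^esub> act x gA, y1) * \<phi> (inv\<^bsub>H\<^esub> y1 \<otimes>\<^bsub>H\<^esub> x)"
    using assms by (simp add: sum.delta)
  finally show ?thesis .
qed

lemma in_ME_iff:
  assumes "group H" "y1 \<in> M_E H act gA E" "x \<in> carrier H"
  shows "(inv\<^bsub>H\<^esub> y1 \<otimes>\<^bsub>H\<^esub> x \<in> V_E H act gA E) = (x \<in> V_E H act gA E)"
proof -
  interpret group H by fact
  have y: "y1 \<in> carrier H" and eq: "(\<lambda>x. y1 \<otimes>\<^bsub>H\<^esub> x) ` V_E H act gA E = V_E H act gA E"
    using assms(2) unfolding M_E_def by auto
  have Vc: "V_E H act gA E \<subseteq> carrier H" unfolding V_E_def by auto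
  show ?thesis
  proof
    assume "inv\<^bsub>H\<^esub> y1 \<otimes>\<^bsub>H\<^esub> x \<in> V_E H act gA E"
    then have "y1 \<otimes>\<^bsub>H\<^esub> (inv\<^bsub>H\<^esub> y1 \<otimes>\<^bsub>H\<^esub> x) \<in> V_E H act gA E"
      using eq by blast
    then show "x \<in> V_E H act gA E" using y assms(3)
      by (simp add: m_assoc[symmetric])
  next
    assume "x \<in> V_E H act gA E"
    then obtain v where v: "v \<in> V_E H act gA E" "x = y1 \<otimes>\<^bsub>H\<^esub> v" using eq by blast
    then have "inv\<^bsub>H\<^esub> y1 \<otimes>\<^bsub>H\<^esub> x = v" using y Vc
      by (auto simp add: m_assoc[symmetric])
    then show "inv\<^bsub>H\<^esub> y1 \<otimes>\<^bsub>H\<^esub> x \<in> V_E H act gA E" using v by simp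
  qed
qed

lemma notin_ME:
  assumes "group H" "finite (carrier H)" "y1 \<in> carrier H" "y1 \<notin> M_E H act gA E"
  shows "\<exists>x\<in>V_E H act gA E. inv\<^bsub>H\<^esub> y1 \<otimes>\<^bsub>H\<^esub> x \<notin> V_E H act gA E"
proof (rule ccontr)
  interpret group H by fact
  let ?V = "V_E H act gA E"
  assume "\<not> ?thesis"
  then have all: "\<forall>x\<in>?V. inv\<^bsub>H\<^esub> y1 \<otimes>\<^bsub>H\<^esub> x \<in> ?V" by blast
  have Vc: "?V \<subseteq> carrier H" unfolding V_E_def by auto
  have sub: "?V \<subseteq> (\<lambda>x. y1 \<otimes>\<^bsub>H\<^esub> x) ` ?V"
  proof
    fix x assume x: "x \<in> ?V"
    then have "x = y1 \<otimes>\<^bsub>H\<^esub> (inv\<^bsub>H\<^esub> y1 \<otimes>\<^bsub>H\<^esub> x)" using Vc assms(3)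
      by (auto simp add: m_assoc[symmetric])
    then show "x \<in> (\<lambda>x. y1 \<otimes>\<^bsub>H\<^esub> x) ` ?V" using all x by blast
  qed
  have fin: "finite ?V" using Vc assms(2) finite_subset by blast
  have "card ((\<lambda>x. y1 \<otimes>\<^bsub>H\<^esub> x) ` ?V) = card ?V"
    using inj_on_subset[OF inj_on_cmult[OF assms(3)] Vc] by (rule card_image)
  then have "?V = (\<lambda>x. y1 \<otimes>\<^bsub>H\<^esub> x) ` ?V"
    using card_subset_eq[OF finite_imageI[OF fin] sub] by simp
  then have "y1 \<in> M_E H act gA E" unfolding M_E_def using assms(3) by simp
  then show False using assms(4) by simp
qed

theorem mainTheorem7:
  fixes G :: "('g, 'a) monoid_scheme" and H :: "('h, 'b) monoid_scheme"
    and act :: "'h \<Rightarrow> 'g \<Rightarrow> 'g" and gA :: 'g and E :: "'g set"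
    and f :: "'g \<times> 'h \<Rightarrow> complex"
  assumes "group G" and "group H"
    and "finite (carrier G)" and "finite (carrier H)"
    and act_closed: "\<And>h g. h \<in> carrier H \<Longrightarrow> g \<in> carrier G \<Longrightarrow> act h g \<in> carrier G"
    and act_one: "\<And>g. g \<in> carrier G \<Longrightarrow> act \<one>\<^bsub>H\<^esub> g = g"
    and act_mult: "\<And>h h' g. h \<in> carrier H \<Longrightarrow> h' \<in> carrier H \<Longrightarrow> g \<in> carrier G \<Longrightarrow>
                   act (h \<otimes>\<^bsub>H\<^esub> h') g = act h (act h' g)"
    and act_hom: "\<And>h g g'. h \<in> carrier H \<Longrightarrow> g \<in> carrier G \<Longrightarrow> g' \<in> carrier G \<Longrightarrow>
                   act h (g \<otimes>\<^bsub>G\<^esub> g') = act h g \<otimes>\<^bsub>G\<^esub> act h g'"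
    and "gA \<in> carrier G"
    and "E \<subseteq> (\<lambda>h. act h gA) ` carrier H"
  shows "f \<in> T_r G H act gA E \<longleftrightarrow>
           ((\<forall>x1\<in>carrier G. \<forall>y1\<in>carrier H. y1 \<notin> M_E H act gA E \<longrightarrow> f (x1, y1) = 0) \<and>
            (\<forall>x1\<in>carrier G. \<forall>y1\<in>carrier H. \<forall>k\<in>generate G E.
                f (x1 \<otimes>\<^bsub>G\<^esub> k, y1) = f (x1, y1)))"
  proof -
  interpret G: group G by fact
  interpret H: group H by fact
  let ?V = "V_E H act gA E"
  let ?phi = "phi_r H act gA E"
  have Ec: "E \<subseteq> carrier G" using assms(10) act_closed assms(9) by blast
  have Tr: "f \<in> T_r G H act gA E \<longleftrightarrow> (\<forall>x1\<in>carrier G. \<forall>y1\<in>carrier H. \<forall>x\<in>carrier H.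
     f (x1 \<otimes>\<^bsub>G\<^esub> act x gA, y1) * ?phi (inv\<^bsub>H\<^esub> y1 \<otimes>\<^bsub>H\<^esub> x) = f (x1, y1) * ?phi x)"
    unfolding T_r_def by (simp add: tensor_vec_def lhs_simp[OF assms(4)])
  show ?thesis
  proof
    assume "f \<in> T_r G H act gA E"
    then have C: "\<And>x1 y1 x. x1 \<in> carrier G \<Longrightarrow> y1 \<in> carrier H \<Longrightarrow> x \<in> carrier H \<Longrightarrow>
       f (x1 \<otimes>\<^bsub>G\<^esub> act x gA, y1) * ?phi (inv\<^bsub>H\<^esub> y1 \<otimes>\<^bsub>H\<^esub> x) = f (x1, y1) * ?phi x"
      using Tr by blast
    have Z: "f (x1, y1) = 0" if zz: "x1 \<in> carrier G" "y1 \<in> carrier H" "y1 \<notin> M_E H act gA E" for x1 y1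
    proof -
      obtain x where x: "x \<in> ?V" "inv\<^bsub>H\<^esub> y1 \<otimes>\<^bsub>H\<^esub> x \<notin> ?V"
        using notin_ME[OF assms(2,4) zz(2,3)] by blast
      have "x \<in> carrier H" using x unfolding V_E_def by auto
      from C[OF zz(1,2) this] x show ?thesis by (simp add: phi_r_def)
    qed
    have I1: "f (x1 \<otimes>\<^bsub>G\<^esub> e, y1) = f (x1, y1)" if ii: "x1 \<in> carrier G" "y1 \<in> carrier H" "e \<in> E" for x1 y1 e
    proof (cases "y1 \<in> M_E H act gA E")
      case True
      obtain x where x: "x \<in> carrier H" "e = act x gA" using ii(3) assms(10) by blast
      then have xV: "x \<in> ?V" using ii(3) unfolding V_E_def by simp
      then have "inv\<^bsub>H\<^esub> y1 \<otimes>\<^bsub>H\<^esub> x \<in> ?V" using in_ME_iff[OF assms(2) True x(1)] by simp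
      with C[OF ii(1,2) x(1)] xV x(2) show ?thesis by (simp add: phi_r_def)
    next
      case False
      have "x1 \<otimes>\<^bsub>G\<^esub> e \<in> carrier G" using that Ec by blast
      then show ?thesis using Z False that by simp
    qed
    have I: "f (x1 \<otimes>\<^bsub>G\<^esub> k, y1) = f (x1, y1)"
      if "k \<in> generate G E" "x1 \<in> carrier G" "y1 \<in> carrier H" for x1 y1 k using that
    proof (induction k arbitrary: x1 rule: generate.induct)
      case one
      then show ?case by simp
    next
      case (incl h)
      then show ?case using I1 by blast
    next
      case (inv h)
      have h: "h \<in> carrier G" using inv Ec by blast
      have c: "x1 \<otimes>\<^bsub>G\<^esub> inv\<^bsub>G\<^esub> h \<in> carrier G" using h inv by blast
      have "f (x1, y1) = f ((x1 \<otimes>\<^bsub>G\<^esub> inv\<^bsub>G\<^esub> h) \<otimes>\<^bsub>G\<^esub> h, y1)"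
        using h inv by (simp add: G.m_assoc)
      also have "\<dots> = f (x1 \<otimes>\<^bsub>G\<^esub> inv\<^bsub>G\<^esub> h, y1)" using I1[OF c inv(3) inv(1)] .
      finally show ?case by simp
    next
      case (eng h1 h2)
      have c: "h1 \<in> carrier G" "h2 \<in> carrier G"
        using eng(1,2) G.generate_in_carrier[OF Ec] by auto
      have "f (x1 \<otimes>\<^bsub>G\<^esub> (h1 \<otimes>\<^bsub>G\<^esub> h2), y1) = f ((x1 \<otimes>\<^bsub>G\<^esub> h1) \<otimes>\<^bsub>G\<^esub> h2, y1)"
        using c eng by (simp add: G.m_assoc)
      also have "\<dots> = f (x1 \<otimes>\<^bsub>G\<^esub> h1, y1)" using eng c by simp
      also have "\<dots> = f (x1, y1)" using eng by simp
      finally show ?case .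
    qed
    show "(\<forall>x1\<in>carrier G. \<forall>y1\<in>carrier H. y1 \<notin> M_E H act gA E \<longrightarrow> f (x1, y1) = 0) \<and>
            (\<forall>x1\<in>carrier G. \<forall>y1\<in>carrier H. \<forall>k\<in>generate G E.
                f (x1 \<otimes>\<^bsub>G\<^esub> k, y1) = f (x1, y1))"
      using Z I by blast
  next
    assume R: "(\<forall>x1\<in>carrier G. \<forall>y1\<in>carrier H. y1 \<notin> M_E H act gA E \<longrightarrow> f (x1, y1) = 0) \<and>
            (\<forall>x1\<in>carrier G. \<forall>y1\<in>carrier H. \<forall>k\<in>generate G E.
                f (x1 \<otimes>\<^bsub>G\<^esub> k, y1) = f (x1, y1))"
    have "f (x1 \<otimes>\<^bsub>G\<^esub> act x gA, y1) * ?phi (inv\<^bsub>H\<^esub> y1 \<otimes>\<^bsub>H\<^esub> x) = f (x1, y1) * ?phi x"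
      if "x1 \<in> carrier G" "y1 \<in> carrier H" "x \<in> carrier H" for x1 y1 x
    proof (cases "y1 \<in> M_E H act gA E")
      case True
      show ?thesis
      proof (cases "x \<in> ?V")
        case True
        then have "act x gA \<in> generate G E" unfolding V_E_def by (auto intro: generate.incl)
        then show ?thesis using R that True in_ME_iff[OF assms(2) \<open>y1 \<in> M_E H act gA E\<close> that(3)]
          by (simp add: phi_r_def)
      next
        case False
        then show ?thesis using in_ME_iff[OF assms(2) \<open>y1 \<in> M_E H act gA E\<close> that(3)]
          by (simp add: phi_r_def)
      qed
    next
      case False
      have "x1 \<otimes>\<^bsub>G\<^esub> act x gA \<in> carrier G" using that act_closed assms(9) by blast
      then show ?thesis using R False that by simp
    qed
    then show "f \<in> T_r G H act gA E" using Tr by blast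
  qed
qed

end
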